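(* Let $h$ be the height function of a single-species TASEP with arbitrary initial condition, and let $x(\cdot)$ be a backwards path with respect to $h$ started at some time $t$. Let $t_1<t_2$ in $[0,t]$ and $x_1,x_2\in\mathbb{Z}$, and suppose $x(t_1)\ge x_1$ and $x(t_2)\ge x_2$. Let $x^{\mathrm{step},l}(\tau)$, $\tau\in[t_1,t_2]$, be the leftmost backwards path with respect to $h^{\mathrm{step}}_{x_1,t_1}$ starting at time $t_2$ from position $x_2$, all processes being coupled by basic coupling. Then $x(\tau)\ge x^{\mathrm{step},l}(\tau)$ for all $\tau\in[t_1,t_2]$.
   Context: Single-species TASEP (graphical construction): independent rate-one Poisson processes $\mathcal{P}_z$, $z\in\mathbb{Z}$; at each ring of $\mathcal{P}_z$ (a jump attempt at site $z$) a particle at $z$, if any, jumps to $z+1$ if $z+1$ is empty. Basic coupling: several TASEPs are constructed with the same Poisson processes. A height function $h(j,s)$ of a TASEP satisfies $h(j,s)-h(j-1,s)=1-2\eta_s(j)$ ($\eta_s(j)=1$ iff a particle is at $j$), and each jump of a particle from $j$ to $j+1$ at time $s$ increases $h(j,\cdot)$ by $2$ and leaves all other values unchanged. For $y\in\mathbb{Z}$, $\tau\ge0$, $h^{\mathrm{step}}_{y,\tau}$ denotes the height function of the TASEP started at time $\tau$ from particles on all sites $\le y$ and holes on all sites $>y$, normalised by $h^{\mathrm{step}}_{y,\tau}(j,\tau)=|j-y|$. Backwards path with respect to a height function $h$, started at time $t$ from $x(t)=x$: a piecewise constant path defined going backwards in time; it changes only at times $s$ at which there is a jump attempt at site $x(s)$.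 At such a time: if a jump occurred, i.e. $h(x(s),s)=h(x(s),s^-)+2$, set $x(s^-)=x(s)$; otherwise choose $x(s^-)\in\{x(s)-1,x(s)+1\}$ such that $h(x(s^-),s)=h(x(s),s)-1$. The rightmost (resp. leftmost) backwards path always chooses $x(s)+1$ (resp. $x(s)-1$) when this choice is allowed. *)

theory Defs
  imports "HOL-Analysis.Analysis"
begin

text \<open>A realisation of the clocks is a
family P of point sets, P z = set of jump-attempt times at site z. We assume the
almost-sure properties of independent rate-one Poisson processes: all points are
positive, finitely many in every bounded time window, and distinct sites never ring
simultaneously.\<close>

definition clock_realisation :: "(int \<Rightarrow> real set) \<Rightarrow> bool" where
  "clock_realisation P \<longleftrightarrow>
     (\<forall>z. P z \<subseteq> {0<..}) \<and>
     (\<forall>z T. finite (P z \<inter> {..T})) \<and>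
     (\<forall>z z'. z \<noteq> z' \<longrightarrow> P z \<inter> P z' = {})"

definition hleft :: "(int \<Rightarrow> real \<Rightarrow> int) \<Rightarrow> int \<Rightarrow> real \<Rightarrow> int" where
  "hleft h j s = Lim (at_left s) (h j)"

definition occupied :: "(int \<Rightarrow> int) \<Rightarrow> int \<Rightarrow> bool" where
  "occupied g j \<longleftrightarrow> g j - g (j - 1) = -1"

text \<open>h is the height function of a TASEP started at time tau (arbitrary initial
condition) and driven by the clocks P: increments are +-1; h(j,.) is constant between
jump attempts at site j (right-continuous); at a jump attempt at site j at time s the
particle at j (if any) jumps to j+1 if j+1 is empty, which increases h(j,.) by 2.\<close>
definition tasep_height :: "(int \<Rightarrow> real set) \<Rightarrow> real \<Rightarrow> (int \<Rightarrow> real \<Rightarrow> int) \<Rightarrow> bool" where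
  "tasep_height P \<tau> h \<longleftrightarrow>
     (\<forall>j s. \<tau> \<le> s \<longrightarrow> h j s - h (j - 1) s \<in> {-1, 1}) \<and>
     (\<forall>j s s'. \<tau> \<le> s \<and> s \<le> s' \<and> P j \<inter> {s<..s'} = {} \<longrightarrow> h j s' = h j s) \<and>
     (\<forall>j s. s \<in> P j \<and> \<tau> < s \<longrightarrow>
        h j s = hleft h j s +
          (if occupied (\<lambda>k. hleft h k s) j \<and> \<not> occupied (\<lambda>k. hleft h k s) (j + 1)
           then 2 else 0))"

definition step_height :: "(int \<Rightarrow> real set) \<Rightarrow> int \<Rightarrow> real \<Rightarrow> (int \<Rightarrow> real \<Rightarrow> int) \<Rightarrow> bool" where
  "step_height P y \<tau> h \<longleftrightarrow> tasep_height P \<tau> h \<and> (\<forall>j. h j \<tau> = \<bar>j - y\<bar>)"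

definition backwards_path ::
  "(int \<Rightarrow> real set) \<Rightarrow> (int \<Rightarrow> real \<Rightarrow> int) \<Rightarrow> real \<Rightarrow> real \<Rightarrow> (real \<Rightarrow> int) \<Rightarrow> bool" where
  "backwards_path P h a t x \<longleftrightarrow>
     (\<forall>s. a \<le> s \<and> s < t \<longrightarrow> (x \<longlongrightarrow> x s) (at_right s)) \<and>
     (\<forall>s. a < s \<and> s \<le> t \<longrightarrow> (\<exists>v. (x \<longlongrightarrow> v) (at_left s) \<and>
        (s \<notin> P (x s) \<longrightarrow> v = x s) \<and>
        (s \<in> P (x s) \<and> h (x s) s = hleft h (x s) s + 2 \<longrightarrow> v = x s) \<and>
        (s \<in> P (x s) \<and> h (x s) s \<noteq> hleft h (x s) s + 2 \<longrightarrow>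
           (v = x s - 1 \<or> v = x s + 1) \<and> h v s = h (x s) s - 1)))"

definition leftmost_backwards_path ::
  "(int \<Rightarrow> real set) \<Rightarrow> (int \<Rightarrow> real \<Rightarrow> int) \<Rightarrow> real \<Rightarrow> real \<Rightarrow> (real \<Rightarrow> int) \<Rightarrow> bool" where
  "leftmost_backwards_path P h a t x \<longleftrightarrow>
     backwards_path P h a t x \<and>
     (\<forall>s. a < s \<and> s \<le> t \<and> s \<in> P (x s) \<and> h (x s) s \<noteq> hleft h (x s) s + 2 \<and>
          h (x s - 1) s = h (x s) s - 1 \<longrightarrow> (x \<longlongrightarrow> x s - 1) (at_left s))"

end

theory Submission
  imports Defs
begin


lemma int_tendsto_eventually:
  fixes f :: "real \<Rightarrow> int"
  assumes "(f \<longlongrightarrow> c) F"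
  shows "eventually (\<lambda>y. f y = c) F"
  using assms tendsto_discrete by blast

lemma fin_right:
  fixes s :: real
  shows "finite A \<Longrightarrow> \<exists>\<delta>>0. \<forall>a\<in>A. s < a \<longrightarrow> s + \<delta> \<le> a"
proof (induction A rule: finite_induct)
  case empty then show ?case by (auto intro: exI[of _ 1])
next
  case (insert b A)
  then obtain d where d: "d > 0" "\<forall>a\<in>A. s < a \<longrightarrow> s + d \<le> a" by auto
  show ?case
  proof (cases "s < b")
    case True
    then show ?thesis using d by (intro exI[of _ "min d (b - s)"]) auto
  next
    case False
    then show ?thesis using d by (intro exI[of _ d]) auto
  qed
qed

lemma fin_left:
  fixes s :: real
  shows "finite A \<Longrightarrow> \<exists>\<delta>>0. \<forall>a\<in>A. a < s \<longrightarrow> a \<le> s - \<delta>"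
proof (induction A rule: finite_induct)
  case empty then show ?case by (auto intro: exI[of _ 1])
next
  case (insert b A)
  then obtain d where d: "d > 0" "\<forall>a\<in>A. a < s \<longrightarrow> a \<le> s - d" by auto
  show ?case
  proof (cases "b < s")
    case True
    then show ?thesis using d by (intro exI[of _ "min d (s - b)"]) auto
  next
    case False
    then show ?thesis using d by (intro exI[of _ d]) auto
  qed
qed

lemma gap_right:
  assumes "clock_realisation P"
  shows "\<exists>\<delta>>0. \<forall>p\<in>P j. s < p \<longrightarrow> s + \<delta> \<le> p"
proof -
  have "finite (P j \<inter> {..s+1})" using assms unfolding clock_realisation_def by blast
  from fin_right[OF this, of s] obtain d where d: "d>0" "\<forall>a\<in>P j \<inter> {..s+1}. s < a \<longrightarrow> s + d \<le> a" by blast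
  have "\<forall>p\<in>P j. s < p \<longrightarrow> s + min d 1 \<le> p"
  proof (intro ballI impI)
    fix p assume p: "p \<in> P j" "s < p"
    show "s + min d 1 \<le> p"
    proof (cases "p \<le> s + 1")
      case True then have "s + d \<le> p" using d p by blast
      then show ?thesis by linarith
    next
      case False then show ?thesis by linarith
    qed
  qed
  then show ?thesis using d(1) by (intro exI[of _ "min d 1"]) simp
qed

lemma gap_left:
  assumes "clock_realisation P"
  shows "\<exists>\<delta>>0. \<forall>p\<in>P j. p < s \<longrightarrow> p \<le> s - \<delta>"
proof -
  have "finite (P j \<inter> {..s})" using assms unfolding clock_realisation_def by blast
  from fin_left[OF this, of s] obtain d where d: "d>0" "\<forall>a\<in>P j \<inter> {..s}. a < s \<longrightarrow> a \<le> s - d" by blast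
  have "\<forall>p\<in>P j. p < s \<longrightarrow> p \<le> s - d" using d(2) by auto
  then show ?thesis using d(1) by blast
qed

lemma th_right:
  assumes "clock_realisation P" "tasep_height P \<tau> h" "\<tau> \<le> s"
  shows "\<exists>\<delta>>0. \<forall>s'. s \<le> s' \<and> s' < s + \<delta> \<longrightarrow> h j s' = h j s"
proof -
  obtain d where d: "d>0" "\<forall>p\<in>P j. s < p \<longrightarrow> s + d \<le> p" using gap_right[OF assms(1)] by blast
  have "h j s' = h j s" if "s \<le> s'" "s' < s + d" for s'
  proof -
    have "P j \<inter> {s<..s'} = {}"
    proof -
      { fix p assume p: "p \<in> P j" "s < p" "p \<le> s'"
        then have "s + d \<le> p" using d by blast
        then have False using that p by linarith }
      then show ?thesis by auto
    qed
    then show ?thesis using assms(2,3) that unfolding tasep_height_def by blast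
  qed
  then show ?thesis using d by blast
qed

lemma th_left:
  assumes "clock_realisation P" "tasep_height P \<tau> h" "\<tau> < s"
  shows "\<exists>\<delta>>0. \<forall>r. s - \<delta> < r \<and> r < s \<longrightarrow> \<tau> \<le> r \<and> h j r = hleft h j s \<and> P j \<inter> {r<..<s} = {}"
proof -
  obtain d0 where d0: "d0>0" "\<forall>p\<in>P j. p < s \<longrightarrow> p \<le> s - d0" using gap_left[OF assms(1)] by blast
  define d where "d = min d0 (s - \<tau>)"
  have dpos: "d > 0" using d0 assms(3) by (simp add: d_def)
  have d1: "d \<le> d0" "d \<le> s - \<tau>" by (auto simp: d_def)
  have empty: "P j \<inter> {r<..<s} = {}" if "s - d < r" for r
  proof -
    { fix p assume p: "p \<in> P j" "r < p" "p < s"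
      then have "p \<le> s - d0" using d0 by blast
      then have False using that p d1 by linarith }
    then show ?thesis by auto
  qed
  have const: "h j r' = h j r" if "s - d < r" "r \<le> r'" "r' < s" for r r'
  proof -
    have "P j \<inter> {r<..r'} = {}" using empty[OF that(1)] that(3) by auto
    moreover have "\<tau> \<le> r" using that d1 by linarith
    moreover have "\<forall>j s s'. \<tau> \<le> s \<and> s \<le> s' \<and> P j \<inter> {s<..s'} = {} \<longrightarrow> h j s' = h j s"
      using assms(2) unfolding tasep_height_def by (elim conjE) assumption
    ultimately show ?thesis using that(2) by blast
  qed
  have lim: "hleft h j s = h j r" if "s - d < r" "r < s" for r
  proof -
    have "eventually (\<lambda>y. y \<in> {r<..<s}) (at_left s)" using that by (intro eventually_at_left_real) auto
    then have "eventually (\<lambda>y. h j y = h j r) (at_left s)"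
    proof eventually_elim
      case (elim y)
      then have "r \<le> y" "y < s" by auto
      then show ?case using const[OF that(1)] by blast
    qed
    then have "(h j \<longlongrightarrow> h j r) (at_left s)" by (rule tendsto_eventually)
    then show ?thesis unfolding hleft_def by (intro tendsto_Lim) auto
  qed
  have "\<forall>r. s - d < r \<and> r < s \<longrightarrow> \<tau> \<le> r \<and> h j r = hleft h j s \<and> P j \<inter> {r<..<s} = {}"
  proof (intro allI impI conjI)
    fix r assume r: "s - d < r \<and> r < s"
    show "\<tau> \<le> r" using r d1 by linarith
    have "hleft h j s = h j r" using r lim by blast
    then show "h j r = hleft h j s" by (rule sym)
    show "P j \<inter> {r<..<s} = {}" using empty r by simp
  qed
  then show ?thesis using dpos by blast
qed


lemma th_const:
  assumes "tasep_height P \<tau> h" "\<tau> \<le> s" "s \<le> s'" "P j \<inter> {s<..s'} = {}"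
  shows "h j s' = h j s"
  using assms unfolding tasep_height_def by blast

lemma th_jump:
  assumes "tasep_height P \<tau> h" "\<tau> < s" "s \<in> P j"
  shows "h j s = hleft h j s +
          (if occupied (\<lambda>k. hleft h k s) j \<and> \<not> occupied (\<lambda>k. hleft h k s) (j + 1)
           then 2 else 0)"
  using assms unfolding tasep_height_def by blast

lemma th_pm:
  assumes "tasep_height P \<tau> h" "\<tau> \<le> s"
  shows "h j s - h (j - 1) s \<in> {-1, 1}"
  using assms unfolding tasep_height_def by blast

lemma th_nojump:
  assumes "clock_realisation P" "tasep_height P \<tau> h" "\<tau> < s" "s \<notin> P j"
  shows "h j s = hleft h j s"
proof -
  obtain d where d: "d > 0" "\<forall>r. s - d < r \<and> r < s \<longrightarrow> \<tau> \<le> r \<and> h j r = hleft h j s \<and> P j \<inter> {r<..<s} = {}"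
    using th_left[OF assms(1-3)] by blast
  define r where "r = s - d/2"
  have r: "s - d < r" "r < s" using d(1) by (auto simp: r_def)
  have r2: "\<tau> \<le> r" "h j r = hleft h j s" "P j \<inter> {r<..<s} = {}"
    using d(2)[rule_format, OF conjI[OF r(1) r(2)]] by auto
  have "P j \<inter> {r<..s} = {}"
  proof -
    { fix p assume p: "p \<in> P j" "r < p" "p \<le> s"
      have False
      proof (cases "p = s")
        case True then show False using p assms(4) by simp
      next
        case False then have "p \<in> P j \<inter> {r<..<s}" using p by auto
        then show False using r2(3) by blast
      qed }
    then show ?thesis by auto
  qed
  then have "h j s = h j r" using th_const[OF assms(2) r2(1), of s j] r(2) by simp
  then show ?thesis using r2(2) by (rule trans)
qed

lemma th_pm_left:
  assumes "clock_realisation P" "tasep_height P \<tau> h" "\<tau> < s"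
  shows "hleft h j s - hleft h (j - 1) s \<in> {-1, 1}"
proof -
  obtain d1 where d1: "d1 > 0" "\<forall>r. s - d1 < r \<and> r < s \<longrightarrow> \<tau> \<le> r \<and> h j r = hleft h j s \<and> P j \<inter> {r<..<s} = {}"
    using th_left[OF assms(1-3)] by blast
  obtain d2 where d2: "d2 > 0" "\<forall>r. s - d2 < r \<and> r < s \<longrightarrow> \<tau> \<le> r \<and> h (j-1) r = hleft h (j-1) s \<and> P (j-1) \<inter> {r<..<s} = {}"
    using th_left[OF assms(1-3)] by blast
  define r where "r = s - min d1 d2/2"
  have r: "s - d1 < r" "s - d2 < r" "r < s" using d1(1) d2(1) by (auto simp: r_def)
  have "\<tau> \<le> r" "h j r = hleft h j s" "h (j-1) r = hleft h (j-1) s"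
    using d1(2)[rule_format, OF conjI[OF r(1) r(3)]] d2(2)[rule_format, OF conjI[OF r(2) r(3)]] by auto
  then show ?thesis using th_pm[OF assms(2), of r j] by simp
qed

lemma th_mono_aux:
  assumes "clock_realisation P" "tasep_height P \<tau> h" "\<tau> \<le> s"
  shows "card (P j \<inter> {s<..s'}) = n \<Longrightarrow> s \<le> s' \<Longrightarrow> h j s \<le> h j s'"
proof (induction n arbitrary: s' rule: less_induct)
  case (less n)
  have fin: "finite (P j \<inter> {s<..s'})"
  proof -
    have "finite (P j \<inter> {..s'})" using assms(1) unfolding clock_realisation_def by blast
    then show ?thesis by (rule finite_subset[rotated]) auto
  qed
  show ?case
  proof (cases "P j \<inter> {s<..s'} = {}")
    case True
    then show ?thesis using th_const[OF assms(2,3) less.prems(2) True] by simp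
  next
    case False
    define m where "m = Max (P j \<inter> {s<..s'})"
    have m: "m \<in> P j \<inter> {s<..s'}" using Max_in[OF fin False] by (simp add: m_def)
    have mmax: "p \<le> m" if "p \<in> P j \<inter> {s<..s'}" for p using Max_ge[OF fin that] by (simp add: m_def)
    have "P j \<inter> {m<..s'} = {}"
    proof -
      { fix p assume p: "p \<in> P j" "m < p" "p \<le> s'"
        then have "p \<in> P j \<inter> {s<..s'}" using m by auto
        then have "p \<le> m" by (rule mmax)
        then have False using p by linarith }
      then show ?thesis by auto
    qed
    then have hs': "h j s' = h j m" using th_const[OF assms(2), of m s' j] m assms(3) by auto
    have tm: "\<tau> < m" using m assms(3) by auto
    have hm: "hleft h j m \<le> h j m" using th_jump[OF assms(2) tm, of j] m by auto
    obtain d where d: "d > 0" "\<forall>r. m - d < r \<and> r < m \<longrightarrow> \<tau> \<le> r \<and> h j r = hleft h j m \<and> P j \<inter> {r<..<m} = {}"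
      using th_left[OF assms(1,2) tm] by blast
    define r where "r = max s (m - d/2)"
    have r: "m - d < r" "r < m" "s \<le> r" using d(1) m by (auto simp: r_def)
    have r2: "h j r = hleft h j m" "P j \<inter> {r<..<m} = {}"
      using d(2)[rule_format, OF conjI[OF r(1) r(2)]] by auto
    have sub: "P j \<inter> {s<..r} \<subseteq> (P j \<inter> {s<..s'}) - {m}"
    proof
      fix p assume p: "p \<in> P j \<inter> {s<..r}"
      then show "p \<in> (P j \<inter> {s<..s'}) - {m}" using r m by auto
    qed
    have fin2: "finite ((P j \<inter> {s<..s'}) - {m})" using fin by simp
    have "card (P j \<inter> {s<..r}) \<le> card ((P j \<inter> {s<..s'}) - {m})"
      by (rule card_mono[OF fin2 sub])
    also have "\<dots> < card (P j \<inter> {s<..s'})" by (rule card_Diff1_less[OF fin m])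
    finally have lt: "card (P j \<inter> {s<..r}) < n" using less.prems(1) by simp
    have "h j s \<le> h j r" by (rule less.IH[OF lt refl r(3)])
    then show ?thesis using hs' hm r2 by linarith
  qed
qed

lemma th_mono:
  assumes "clock_realisation P" "tasep_height P \<tau> h" "\<tau> \<le> s" "s \<le> s'"
  shows "h j s \<le> h j s'"
  using th_mono_aux[OF assms(1-3) refl assms(4)] .

lemma bp_right:
  assumes "backwards_path P h a t x" "a \<le> s" "s < t"
  shows "\<exists>\<delta>>0. \<forall>s'. s \<le> s' \<and> s' < s + \<delta> \<longrightarrow> x s' = x s"
proof -
  have "(x \<longlongrightarrow> x s) (at_right s)" using assms unfolding backwards_path_def by blast
  then have "eventually (\<lambda>y. x y = x s) (at_right s)" by (rule int_tendsto_eventually)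
  then obtain b where b: "b > s" "\<forall>y>s. y < b \<longrightarrow> x y = x s" unfolding eventually_at_right_field by blast
  have "\<forall>s'. s \<le> s' \<and> s' < s + (b - s) \<longrightarrow> x s' = x s"
  proof (intro allI impI)
    fix s' assume "s \<le> s' \<and> s' < s + (b - s)"
    then have s': "s \<le> s'" "s' < b" by auto
    show "x s' = x s"
    proof (cases "s' = s")
      case True then show ?thesis by simp
    next
      case False then have "s < s'" using s' by simp
      then show ?thesis using b(2) s'(2) by blast
    qed
  qed
  moreover have "b - s > 0" using b(1) by simp
  ultimately show ?thesis by blast
qed

lemma bp_left:
  assumes "backwards_path P h a t x" "a < s" "s \<le> t"
  shows "\<exists>v \<delta>. \<delta> > 0 \<and> (\<forall>r. s - \<delta> < r \<and> r < s \<longrightarrow> x r = v) \<and> (x \<longlongrightarrow> v) (at_left s) \<and>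
        (s \<notin> P (x s) \<longrightarrow> v = x s) \<and>
        (s \<in> P (x s) \<and> h (x s) s = hleft h (x s) s + 2 \<longrightarrow> v = x s) \<and>
        (s \<in> P (x s) \<and> h (x s) s \<noteq> hleft h (x s) s + 2 \<longrightarrow>
           (v = x s - 1 \<or> v = x s + 1) \<and> h v s = h (x s) s - 1)"
proof -
  obtain v where v: "(x \<longlongrightarrow> v) (at_left s)" "(s \<notin> P (x s) \<longrightarrow> v = x s)"
     "(s \<in> P (x s) \<and> h (x s) s = hleft h (x s) s + 2 \<longrightarrow> v = x s)"
     "(s \<in> P (x s) \<and> h (x s) s \<noteq> hleft h (x s) s + 2 \<longrightarrow>
           (v = x s - 1 \<or> v = x s + 1) \<and> h v s = h (x s) s - 1)"
    using assms unfolding backwards_path_def by blast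
  have "eventually (\<lambda>y. x y = v) (at_left s)" using v(1) by (rule int_tendsto_eventually)
  then obtain b where b: "b < s" "\<forall>y>b. y < s \<longrightarrow> x y = v" unfolding eventually_at_left_field by blast
  have rr: "\<forall>r. s - (s - b) < r \<and> r < s \<longrightarrow> x r = v" using b by auto
  have d: "s - b > 0" using b(1) by simp
  show ?thesis by (rule exI[of _ v], rule exI[of _ "s - b"], intro conjI d rr v(1) v(2) v(3) v(4))
qed

lemma lm_left:
  assumes "leftmost_backwards_path P h a t x" "a < s" "s \<le> t" "(x \<longlongrightarrow> v) (at_left s)"
    "s \<in> P (x s)" "h (x s) s \<noteq> hleft h (x s) s + 2" "h (x s - 1) s = h (x s) s - 1"
  shows "v = x s - 1"
proof -
  have "(x \<longlongrightarrow> x s - 1) (at_left s)" using assms unfolding leftmost_backwards_path_def by blast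
  from tendsto_unique[OF trivial_limit_at_left_real assms(4) this] show ?thesis .
qed

lemma crossing:
  fixes Q :: "real \<Rightarrow> bool"
  assumes "a \<le> b" "\<not> Q a" "Q b"
    and stab: "\<forall>r. a \<le> r \<and> r < b \<longrightarrow> (\<exists>\<delta>>0. \<forall>r'. r \<le> r' \<and> r' < r + \<delta> \<longrightarrow> (Q r' \<longleftrightarrow> Q r))"
  shows "\<exists>\<sigma>. a < \<sigma> \<and> \<sigma> \<le> b \<and> Q \<sigma> \<and> (\<forall>\<delta>>0. \<exists>r. \<sigma> - \<delta> < r \<and> r < \<sigma> \<and> a \<le> r \<and> \<not> Q r)"
proof -
  define S where "S = {r. a \<le> r \<and> r \<le> b \<and> \<not> Q r}"
  define \<sigma> where "\<sigma> = Sup S"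
  have aS: "a \<in> S" using assms(1,2) by (simp add: S_def)
  have ne: "S \<noteq> {}" using aS by blast
  have bdd: "bdd_above S" unfolding bdd_above_def S_def by blast
  have up: "r \<le> \<sigma>" if "r \<in> S" for r unfolding \<sigma>_def by (rule cSup_upper[OF that bdd])
  have sa: "a \<le> \<sigma>" by (rule up[OF aS])
  have sb: "\<sigma> \<le> b" unfolding \<sigma>_def by (rule cSup_least[OF ne]) (simp add: S_def)
  have Qs: "Q \<sigma>"
  proof (rule ccontr)
    assume nQ: "\<not> Q \<sigma>"
    have "\<sigma> \<noteq> b" using nQ assms(3) by blast
    then have lt: "\<sigma> < b" using sb by simp
    then obtain d where d: "d > 0" "\<forall>r'. \<sigma> \<le> r' \<and> r' < \<sigma> + d \<longrightarrow> (Q r' \<longleftrightarrow> Q \<sigma>)"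
      using stab sa by blast
    define e where "e = min d (b - \<sigma>)"
    define r' where "r' = \<sigma> + e / 2"
    have m: "e > 0" "e \<le> d" "e \<le> b - \<sigma>" using d(1) lt by (auto simp: e_def)
    have r'1: "\<sigma> < r'" unfolding r'_def using m by linarith
    have r'2: "r' < \<sigma> + d" unfolding r'_def using m by linarith
    have r'3: "r' \<le> b" unfolding r'_def using m by linarith
    note r' = r'1 r'2 r'3
    then have "\<not> Q r'" using d(2) nQ by auto
    then have "r' \<in> S" using r' sa by (simp add: S_def)
    then have "r' \<le> \<sigma>" by (rule up)
    then show False using r'(1) by simp
  qed
  have as: "a < \<sigma>" using sa Qs assms(2) by (cases "a = \<sigma>") auto
  have acc: "\<exists>r. \<sigma> - \<delta> < r \<and> r < \<sigma> \<and> a \<le> r \<and> \<not> Q r" if dp: "\<delta> > 0" for \<delta>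
  proof -
    have "\<sigma> - \<delta> < Sup S" using dp by (simp add: \<sigma>_def)
    then obtain r where r: "r \<in> S" "\<sigma> - \<delta> < r" using less_cSup_iff[OF ne bdd] by blast
    have "r \<le> \<sigma>" by (rule up[OF r(1)])
    moreover have "r \<noteq> \<sigma>" using r(1) Qs by (auto simp: S_def)
    ultimately show ?thesis using r by (auto simp: S_def)
  qed
  show ?thesis using as sb Qs acc by blast
qed


lemma th_left_multi:
  assumes "clock_realisation P" "tasep_height P \<tau> h" "\<tau> < s"
  shows "finite K \<Longrightarrow> \<exists>\<delta>>0. \<forall>r. s - \<delta> < r \<and> r < s \<longrightarrow> \<tau> \<le> r \<and> (\<forall>k\<in>K. h k r = hleft h k s)"
proof (induction K rule: finite_induct)
  case empty
  have "\<forall>r. s - (s - \<tau>) < r \<and> r < s \<longrightarrow> \<tau> \<le> r \<and> (\<forall>k\<in>{}. h k r = hleft h k s)" by auto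
  moreover have "s - \<tau> > 0" using assms(3) by simp
  ultimately show ?case by blast
next
  case (insert k K)
  obtain d1 where d1: "d1 > 0" "\<forall>r. s - d1 < r \<and> r < s \<longrightarrow> \<tau> \<le> r \<and> (\<forall>k\<in>K. h k r = hleft h k s)"
    using insert.IH by blast
  obtain d2 where d2: "d2 > 0" "\<forall>r. s - d2 < r \<and> r < s \<longrightarrow> \<tau> \<le> r \<and> h k r = hleft h k s \<and> P k \<inter> {r<..<s} = {}"
    using th_left[OF assms] by blast
  define d where "d = min d1 d2"
  have dd: "d > 0" "d \<le> d1" "d \<le> d2" using d1(1) d2(1) by (auto simp: d_def)
  have "\<forall>r. s - d < r \<and> r < s \<longrightarrow> \<tau> \<le> r \<and> (\<forall>k'\<in>insert k K. h k' r = hleft h k' s)"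
  proof (intro allI impI)
    fix r assume r: "s - d < r \<and> r < s"
    then have r1: "s - d1 < r \<and> r < s" and r2: "s - d2 < r \<and> r < s" using dd by linarith+
    show "\<tau> \<le> r \<and> (\<forall>k'\<in>insert k K. h k' r = hleft h k' s)"
      using d1(2)[rule_format, OF r1] d2(2)[rule_format, OF r2] by blast
  qed
  then show ?case using dd(1) by blast
qed

lemma th_right_multi:
  assumes "clock_realisation P" "tasep_height P \<tau> h" "\<tau> \<le> s"
  shows "finite K \<Longrightarrow> \<exists>\<delta>>0. \<forall>s'. s \<le> s' \<and> s' < s + \<delta> \<longrightarrow> (\<forall>k\<in>K. h k s' = h k s)"
proof (induction K rule: finite_induct)
  case empty
  have "\<forall>s'. s \<le> s' \<and> s' < s + 1 \<longrightarrow> (\<forall>k\<in>{}. h k s' = h k s)" by auto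
  then show ?case using zero_less_one by blast
next
  case (insert k K)
  obtain d1 where d1: "d1 > 0" "\<forall>s'. s \<le> s' \<and> s' < s + d1 \<longrightarrow> (\<forall>k\<in>K. h k s' = h k s)"
    using insert.IH by blast
  obtain d2 where d2: "d2 > 0" "\<forall>s'. s \<le> s' \<and> s' < s + d2 \<longrightarrow> h k s' = h k s"
    using th_right[OF assms] by blast
  define d where "d = min d1 d2"
  have dd: "d > 0" "d \<le> d1" "d \<le> d2" using d1(1) d2(1) by (auto simp: d_def)
  have "\<forall>s'. s \<le> s' \<and> s' < s + d \<longrightarrow> (\<forall>k'\<in>insert k K. h k' s' = h k' s)"
  proof (intro allI impI)
    fix s' assume r: "s \<le> s' \<and> s' < s + d"
    then have r1: "s \<le> s' \<and> s' < s + d1" and r2: "s \<le> s' \<and> s' < s + d2" using dd by linarith+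
    show "\<forall>k'\<in>insert k K. h k' s' = h k' s"
      using d1(2)[rule_format, OF r1] d2(2)[rule_format, OF r2] by blast
  qed
  then show ?case using dd(1) by blast
qed



context
  fixes P :: "int \<Rightarrow> real set" and h hstep :: "int \<Rightarrow> real \<Rightarrow> int" and x :: "real \<Rightarrow> int"
    and t t1 t2 :: real and x1 :: int
  assumes clk: "clock_realisation P" and th: "tasep_height P 0 h"
    and bp: "backwards_path P h 0 t x" and t10: "0 \<le> t1" and t12: "t1 \<le> t2" and t2t: "t2 \<le> t"
    and xt1: "x1 \<le> x t1" and hs: "step_height P x1 t1 hstep"
begin

lemma ths: "tasep_height P t1 hstep" using hs unfolding step_height_def by blast
lemma hst1: "hstep j t1 = \<bar>j - x1\<bar>" using hs unfolding step_height_def by blast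

lemma disj: "z \<noteq> z' \<Longrightarrow> s \<in> P z \<Longrightarrow> s \<notin> P z'"
  using clk unfolding clock_realisation_def by blast

lemma hstep_nonneg: "t1 \<le> s \<Longrightarrow> 0 \<le> hstep j s"
proof -
  assume "t1 \<le> s"
  then have "hstep j t1 \<le> hstep j s" using th_mono[OF clk ths order_refl] by blast
  then show ?thesis using hst1[of j] by simp
qed

lemma inv_main:
  "\<forall>j s. t1 \<le> s \<and> s \<le> t2 \<and> hstep j s < int n \<longrightarrow>
      \<not> (x s < j \<and> hstep j s - hstep (j-1) s = -1 \<and> h j s - h (j-1) s \<noteq> -1)"
proof (induction n)
  case 0
  show ?case
  proof (intro allI impI)
    fix j s assume a: "t1 \<le> s \<and> s \<le> t2 \<and> hstep j s < int 0"
    have "0 \<le> hstep j s" using hstep_nonneg a by blast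
    then show "\<not> (x s < j \<and> hstep j s - hstep (j-1) s = -1 \<and> h j s - h (j-1) s \<noteq> -1)" using a by simp
  qed
next
  case (Suc n)
  define Fl where "Fl = (\<lambda>j s. x s < j \<and> hstep j s - hstep (j-1) s = -1 \<and> h j s - h (j-1) s \<noteq> -1)"
  have IH: "\<And>j s. t1 \<le> s \<Longrightarrow> s \<le> t2 \<Longrightarrow> hstep j s < int n \<Longrightarrow> \<not> Fl j s"
    using Suc.IH unfolding Fl_def by blast
  show ?case
  proof (intro allI impI)
    fix j s assume A: "t1 \<le> s \<and> s \<le> t2 \<and> hstep j s < int (Suc n)"
    have "\<not> Fl j s"
    proof
      assume Fjs: "Fl j s"
      have ts: "t1 \<le> s" "s \<le> t2" using A by auto
      have nF1: "\<not> Fl j t1"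
      proof
        assume "Fl j t1"
        then have "x t1 < j" "\<bar>j - x1\<bar> - \<bar>j - 1 - x1\<bar> = -1" unfolding Fl_def using hst1 by auto
        then show False using xt1 by (auto split: abs_split)
      qed
      have stab: "\<forall>r. t1 \<le> r \<and> r < s \<longrightarrow> (\<exists>\<delta>>0. \<forall>r'. r \<le> r' \<and> r' < r + \<delta> \<longrightarrow> (Fl j r' \<longleftrightarrow> Fl j r))"
      proof (intro allI impI)
        fix r assume r: "t1 \<le> r \<and> r < s"
        have r0: "0 \<le> r" using r t10 by linarith
        have rt: "r < t" using r ts t2t by linarith
        obtain d1 where d1: "d1 > 0" "\<forall>s'. r \<le> s' \<and> s' < r + d1 \<longrightarrow> (\<forall>k\<in>{j-1,j}. h k s' = h k r)"
          using th_right_multi[OF clk th r0, of "{j-1,j}"] by blast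
        obtain d2 where d2: "d2 > 0" "\<forall>s'. r \<le> s' \<and> s' < r + d2 \<longrightarrow> (\<forall>k\<in>{j-1,j}. hstep k s' = hstep k r)"
          using th_right_multi[OF clk ths, of r "{j-1,j}"] r by blast
        obtain d3 where d3: "d3 > 0" "\<forall>s'. r \<le> s' \<and> s' < r + d3 \<longrightarrow> x s' = x r"
          using bp_right[OF bp r0 rt] by blast
        define d where "d = min d1 (min d2 d3)"
        have dd: "d > 0" "d \<le> d1" "d \<le> d2" "d \<le> d3" using d1(1) d2(1) d3(1) by (auto simp: d_def)
        have "\<forall>r'. r \<le> r' \<and> r' < r + d \<longrightarrow> (Fl j r' \<longleftrightarrow> Fl j r)"
        proof (intro allI impI)
          fix r' assume r': "r \<le> r' \<and> r' < r + d"
          have q1: "r \<le> r' \<and> r' < r + d1" "r \<le> r' \<and> r' < r + d2" "r \<le> r' \<and> r' < r + d3" using r' dd by linarith+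
          have e1: "h j r' = h j r" "h (j-1) r' = h (j-1) r" using d1(2)[rule_format, OF q1(1)] by simp_all
          have e2: "hstep j r' = hstep j r" "hstep (j-1) r' = hstep (j-1) r" using d2(2)[rule_format, OF q1(2)] by simp_all
          have e3: "x r' = x r" using d3(2)[rule_format, OF q1(3)] .
          show "Fl j r' \<longleftrightarrow> Fl j r" unfolding Fl_def using e1 e2 e3 by simp
        qed
        then show "\<exists>\<delta>>0. \<forall>r'. r \<le> r' \<and> r' < r + \<delta> \<longrightarrow> (Fl j r' \<longleftrightarrow> Fl j r)" using dd(1) by blast
      qed
      obtain \<sigma> where sig: "t1 < \<sigma>" "\<sigma> \<le> s" "Fl j \<sigma>" and acc: "\<forall>\<delta>>0. \<exists>r. \<sigma> - \<delta> < r \<and> r < \<sigma> \<and> t1 \<le> r \<and> \<not> Fl j r"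
        using crossing[of t1 s "Fl j", OF ts(1) nF1 Fjs stab] by blast
      have s0: "0 < \<sigma>" using sig t10 by linarith
      have st: "\<sigma> \<le> t" using sig ts t2t by linarith
      have st2: "\<sigma> \<le> t2" using sig ts by linarith
      define K where "K = {j-2, j-1, j, j+1}"
      have finK: "finite K" by (simp add: K_def)
      obtain d1 where d1: "d1 > 0" "\<forall>r. \<sigma> - d1 < r \<and> r < \<sigma> \<longrightarrow> 0 \<le> r \<and> (\<forall>k\<in>K. h k r = hleft h k \<sigma>)"
        using th_left_multi[OF clk th s0 finK] by blast
      obtain d2 where d2: "d2 > 0" "\<forall>r. \<sigma> - d2 < r \<and> r < \<sigma> \<longrightarrow> t1 \<le> r \<and> (\<forall>k\<in>K. hstep k r = hleft hstep k \<sigma>)"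
        using th_left_multi[OF clk ths sig(1) finK] by blast
      obtain a d3 where d3: "d3 > 0" "\<forall>r. \<sigma> - d3 < r \<and> r < \<sigma> \<longrightarrow> x r = a"
        and pa1: "\<sigma> \<notin> P (x \<sigma>) \<longrightarrow> a = x \<sigma>"
        and pa2: "\<sigma> \<in> P (x \<sigma>) \<and> h (x \<sigma>) \<sigma> = hleft h (x \<sigma>) \<sigma> + 2 \<longrightarrow> a = x \<sigma>"
        and pa3: "\<sigma> \<in> P (x \<sigma>) \<and> h (x \<sigma>) \<sigma> \<noteq> hleft h (x \<sigma>) \<sigma> + 2 \<longrightarrow>
           (a = x \<sigma> - 1 \<or> a = x \<sigma> + 1) \<and> h a \<sigma> = h (x \<sigma>) \<sigma> - 1"
        using bp_left[OF bp s0 st] by blast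
      define d where "d = min d1 (min d2 d3)"
      have dd: "d > 0" "d \<le> d1" "d \<le> d2" "d \<le> d3" using d1(1) d2(1) d3(1) by (auto simp: d_def)
      obtain r where r: "\<sigma> - d < r" "r < \<sigma>" "t1 \<le> r" "\<not> Fl j r" using acc dd(1) by blast
      have r1: "\<sigma> - d1 < r \<and> r < \<sigma>" "\<sigma> - d2 < r \<and> r < \<sigma>" "\<sigma> - d3 < r \<and> r < \<sigma>" using r dd by linarith+
      have xr: "x r = a" using d3(2) r1(3) by blast
      have hr: "\<forall>k\<in>K. h k r = hleft h k \<sigma>" using d1(2) r1(1) by blast
      have sr: "\<forall>k\<in>K. hstep k r = hleft hstep k \<sigma>" using d2(2) r1(2) by blast
      have hr': "h (j-2) r = hleft h (j-2) \<sigma>" "h (j-1) r = hleft h (j-1) \<sigma>" "h j r = hleft h j \<sigma>" "h (j+1) r = hleft h (j+1) \<sigma>"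
        using hr by (auto simp: K_def)
      have sr': "hstep (j-2) r = hleft hstep (j-2) \<sigma>" "hstep (j-1) r = hleft hstep (j-1) \<sigma>" "hstep j r = hleft hstep j \<sigma>" "hstep (j+1) r = hleft hstep (j+1) \<sigma>"
        using sr by (auto simp: K_def)
      have rs: "r \<le> s" "r \<le> t2" using r sig ts by linarith+
      have monoj: "hstep j r \<le> hstep j s" using th_mono[OF clk ths r(3) rs(1)] .
      have hjs: "hstep j s < int n + 1" using A by simp
      have Fs: "x \<sigma> < j" "hstep j \<sigma> - hstep (j-1) \<sigma> = -1" "h j \<sigma> - h (j-1) \<sigma> \<noteq> -1"
        using sig(3) unfolding Fl_def by auto
      have nFr: "\<not> (a < j \<and> hleft hstep j \<sigma> - hleft hstep (j-1) \<sigma> = -1 \<and> hleft h j \<sigma> - hleft h (j-1) \<sigma> \<noteq> -1)"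
        using r(4) xr hr' sr' unfolding Fl_def by simp
      have pmH: "h k \<sigma> - h (k-1) \<sigma> \<in> {-1,1}" for k using th_pm[OF th] s0 by simp
      have pmS: "hstep k \<sigma> - hstep (k-1) \<sigma> \<in> {-1,1}" for k using th_pm[OF ths] sig(1) by simp
      have pmHL: "hleft h k \<sigma> - hleft h (k-1) \<sigma> \<in> {-1,1}" for k using th_pm_left[OF clk th s0] by simp
      have pmSL: "hleft hstep k \<sigma> - hleft hstep (k-1) \<sigma> \<in> {-1,1}" for k using th_pm_left[OF clk ths sig(1)] by simp
      have jH: "h k \<sigma> = hleft h k \<sigma> + (if hleft h k \<sigma> - hleft h (k-1) \<sigma> = -1 \<and> \<not> hleft h (k+1) \<sigma> - hleft h k \<sigma> = -1 then 2 else 0)"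
        if "\<sigma> \<in> P k" for k using th_jump[OF th s0 that] unfolding occupied_def by simp
      have jS: "hstep k \<sigma> = hleft hstep k \<sigma> + (if hleft hstep k \<sigma> - hleft hstep (k-1) \<sigma> = -1 \<and> \<not> hleft hstep (k+1) \<sigma> - hleft hstep k \<sigma> = -1 then 2 else 0)"
        if "\<sigma> \<in> P k" for k using th_jump[OF ths sig(1) that] unfolding occupied_def by simp
      have nH: "h k \<sigma> = hleft h k \<sigma>" if "\<sigma> \<notin> P k" for k using th_nojump[OF clk th s0 that] .
      have nS: "hstep k \<sigma> = hleft hstep k \<sigma>" if "\<sigma> \<notin> P k" for k using th_nojump[OF clk ths sig(1) that] .
      show False
      proof (cases "a \<ge> j")
        case True
        then have "a \<noteq> x \<sigma>" using Fs(1) by simp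
        then have c: "\<sigma> \<in> P (x \<sigma>)" "h (x \<sigma>) \<sigma> \<noteq> hleft h (x \<sigma>) \<sigma> + 2" using pa1 pa2 by blast+
        then have hv: "a = x \<sigma> - 1 \<or> a = x \<sigma> + 1" "h a \<sigma> = h (x \<sigma>) \<sigma> - 1" using pa3 by blast+
        have xs: "x \<sigma> = j - 1" "a = j" using hv(1) True Fs(1) by auto
        have "h j \<sigma> = h (j-1) \<sigma> - 1" using hv(2) xs by simp
        then show False using Fs(3) by simp
      next
        case False
        then have aj: "a < j" by simp
        show False
        proof (cases "\<sigma> \<in> P (j-1)")
          case True
          have nj: "\<sigma> \<notin> P j" using disj[OF _ True] by simp
          note e1 = nH[OF nj] nS[OF nj] jH[OF True] jS[OF True]
          have pj: "hleft h j \<sigma> - hleft h (j-1) \<sigma> \<in> {-1,1}" "hleft hstep j \<sigma> - hleft hstep (j-1) \<sigma> \<in> {-1,1}"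
              "h j \<sigma> - h (j-1) \<sigma> \<in> {-1,1}" using pmHL pmSL pmH by auto
          have q: "hleft h j \<sigma> - hleft h (j-1) \<sigma> = 1" "hleft hstep j \<sigma> - hleft hstep (j-1) \<sigma> = 1"
            "hleft hstep (j-1) \<sigma> - hleft hstep (j-1-1) \<sigma> = -1" "hleft h (j-1) \<sigma> - hleft h (j-1-1) \<sigma> \<noteq> -1"
            "h (j-1) \<sigma> = hleft h (j-1) \<sigma>"
            using e1 pj Fs(2,3) nFr aj by (auto split: if_splits)
          show False
          proof (cases "a = j - 1")
            case True
            have xs: "x \<sigma> = j - 1"
            proof (rule ccontr)
              assume "x \<sigma> \<noteq> j - 1"
              then have "\<sigma> \<notin> P (x \<sigma>)" using disj[OF _ \<open>\<sigma> \<in> P (j-1)\<close>] by metis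
              then show False using pa1 True \<open>x \<sigma> \<noteq> j - 1\<close> by simp
            qed
            then have "\<sigma> \<in> P (x \<sigma>)" "a = x \<sigma>" using \<open>\<sigma> \<in> P (j-1)\<close> True by auto
            then have "h (x \<sigma>) \<sigma> = hleft h (x \<sigma>) \<sigma> + 2" using pa3 by auto
            then show False using q(5) xs by simp
          next
            case False
            then have a2: "a < j - 1" using aj by simp
            have "Fl (j-1) r" unfolding Fl_def using xr a2 hr' sr' q(3,4) by (simp add: algebra_simps)
            moreover have "hstep (j-1) r < int n" using sr' q(2) monoj hjs by linarith
            ultimately show False using IH[OF r(3) rs(2)] by blast
          qed
        next
          case False
          note nj1 = False
          show False
          proof (cases "\<sigma> \<in> P j")
            case True
            have nj2: "\<sigma> \<notin> P (j+1)" using disj[OF _ True] by simp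
            note e1 = nH[OF nj1] nS[OF nj1] jH[OF True] jS[OF True]
            have pj: "hleft h j \<sigma> - hleft h (j-1) \<sigma> \<in> {-1,1}" "hleft hstep j \<sigma> - hleft hstep (j-1) \<sigma> \<in> {-1,1}"
              using pmHL pmSL by auto
            have q: "hleft hstep j \<sigma> - hleft hstep (j-1) \<sigma> = -1" "hleft hstep (j+1) \<sigma> - hleft hstep j \<sigma> = -1"
              "hleft h (j+1) \<sigma> - hleft h j \<sigma> \<noteq> -1"
              using e1 pj Fs(2,3) nFr aj by (auto split: if_splits)
            have "Fl (j+1) r" unfolding Fl_def using xr aj hr' sr' q(2,3) by simp
            moreover have "hstep (j+1) r < int n" using sr' q(2) monoj hjs by linarith
            ultimately show False using IH[OF r(3) rs(2)] by blast
          next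
            case False
            note e1 = nH[OF nj1] nS[OF nj1] nH[OF False] nS[OF False]
            show False using e1 Fs(2,3) nFr aj by simp
          qed
        qed
      qed
    qed
    then show "\<not> (x s < j \<and> hstep j s - hstep (j-1) s = -1 \<and> h j s - h (j-1) s \<noteq> -1)"
      unfolding Fl_def by simp
  qed
qed


lemma inv:
  assumes "t1 \<le> s" "s \<le> t2" "x s < j" "hstep j s - hstep (j-1) s = -1"
  shows "h j s - h (j-1) s = -1"
proof -
  have "hstep j s < int (nat (hstep j s) + 1)" by simp
  then show ?thesis using inv_main[of "nat (hstep j s) + 1"] assms by blast
qed

lemma compare:
  assumes lm: "leftmost_backwards_path P hstep t1 t2 xstep" and end2: "xstep t2 \<le> x t2"
    and tau: "t1 \<le> \<tau>" "\<tau> \<le> t2"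
  shows "xstep \<tau> \<le> x \<tau>"
proof (rule ccontr)
  assume bad: "\<not> xstep \<tau> \<le> x \<tau>"
  have bps: "backwards_path P hstep t1 t2 xstep" using lm unfolding leftmost_backwards_path_def by blast
  define Q where "Q = (\<lambda>r. xstep r \<le> x r)"
  have stab: "\<forall>r. \<tau> \<le> r \<and> r < t2 \<longrightarrow> (\<exists>\<delta>>0. \<forall>r'. r \<le> r' \<and> r' < r + \<delta> \<longrightarrow> (Q r' \<longleftrightarrow> Q r))"
  proof (intro allI impI)
    fix r assume r: "\<tau> \<le> r \<and> r < t2"
    have r0: "0 \<le> r" "t1 \<le> r" using r tau t10 by linarith+
    have rt: "r < t" "r < t2" using r t2t by linarith+
    obtain d1 where d1: "d1 > 0" "\<forall>s'. r \<le> s' \<and> s' < r + d1 \<longrightarrow> x s' = x r"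
      using bp_right[OF bp r0(1) rt(1)] by blast
    obtain d2 where d2: "d2 > 0" "\<forall>s'. r \<le> s' \<and> s' < r + d2 \<longrightarrow> xstep s' = xstep r"
      using bp_right[OF bps r0(2) rt(2)] by blast
    define d where "d = min d1 d2"
    have dd: "d > 0" "d \<le> d1" "d \<le> d2" using d1(1) d2(1) by (auto simp: d_def)
    have "\<forall>r'. r \<le> r' \<and> r' < r + d \<longrightarrow> (Q r' \<longleftrightarrow> Q r)"
    proof (intro allI impI)
      fix r' assume r': "r \<le> r' \<and> r' < r + d"
      have q1: "r \<le> r' \<and> r' < r + d1" "r \<le> r' \<and> r' < r + d2" using r' dd by linarith+
      have "x r' = x r" "xstep r' = xstep r" using d1(2)[rule_format, OF q1(1)] d2(2)[rule_format, OF q1(2)] by auto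
      then show "Q r' \<longleftrightarrow> Q r" unfolding Q_def by simp
    qed
    then show "\<exists>\<delta>>0. \<forall>r'. r \<le> r' \<and> r' < r + \<delta> \<longrightarrow> (Q r' \<longleftrightarrow> Q r)" using dd(1) by blast
  qed
  have nQ: "\<not> Q \<tau>" using bad unfolding Q_def by simp
  have Q2: "Q t2" using end2 unfolding Q_def by simp
  obtain \<sigma> where sig: "\<tau> < \<sigma>" "\<sigma> \<le> t2" "Q \<sigma>" and acc: "\<forall>\<delta>>0. \<exists>r. \<sigma> - \<delta> < r \<and> r < \<sigma> \<and> \<tau> \<le> r \<and> \<not> Q r"
    using crossing[of \<tau> t2 Q, OF tau(2) nQ Q2 stab] by blast
  have s0: "0 < \<sigma>" "t1 < \<sigma>" using sig tau t10 by linarith+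
  have st: "\<sigma> \<le> t" using sig t2t by linarith
  define b where "b = xstep \<sigma>"
  define y where "y = x \<sigma>"
  have by0: "b \<le> y" using sig(3) unfolding Q_def b_def y_def by simp
  define K where "K = {b-1, b, b+1}"
  have finK: "finite K" by (simp add: K_def)
  obtain d1 where d1: "d1 > 0" "\<forall>r. \<sigma> - d1 < r \<and> r < \<sigma> \<longrightarrow> 0 \<le> r \<and> (\<forall>k\<in>K. h k r = hleft h k \<sigma>)"
    using th_left_multi[OF clk th s0(1) finK] by blast
  obtain d2 where d2: "d2 > 0" "\<forall>r. \<sigma> - d2 < r \<and> r < \<sigma> \<longrightarrow> t1 \<le> r \<and> (\<forall>k\<in>K. hstep k r = hleft hstep k \<sigma>)"
    using th_left_multi[OF clk ths s0(2) finK] by blast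
  obtain a d3 where d3: "d3 > 0" "\<forall>r. \<sigma> - d3 < r \<and> r < \<sigma> \<longrightarrow> x r = a"
    and pa1: "\<sigma> \<notin> P y \<longrightarrow> a = y"
    and pa2: "\<sigma> \<in> P y \<and> h y \<sigma> = hleft h y \<sigma> + 2 \<longrightarrow> a = y"
    and pa3: "\<sigma> \<in> P y \<and> h y \<sigma> \<noteq> hleft h y \<sigma> + 2 \<longrightarrow>
           (a = y - 1 \<or> a = y + 1) \<and> h a \<sigma> = h y \<sigma> - 1"
    using bp_left[OF bp s0(1) st] unfolding y_def by blast
  obtain c d4 where d4: "d4 > 0" "\<forall>r. \<sigma> - d4 < r \<and> r < \<sigma> \<longrightarrow> xstep r = c"
    and ctend: "(xstep \<longlongrightarrow> c) (at_left \<sigma>)"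
    and pc1: "\<sigma> \<notin> P b \<longrightarrow> c = b"
    and pc2: "\<sigma> \<in> P b \<and> hstep b \<sigma> = hleft hstep b \<sigma> + 2 \<longrightarrow> c = b"
    and pc3: "\<sigma> \<in> P b \<and> hstep b \<sigma> \<noteq> hleft hstep b \<sigma> + 2 \<longrightarrow>
           (c = b - 1 \<or> c = b + 1) \<and> hstep c \<sigma> = hstep b \<sigma> - 1"
    using bp_left[OF bps s0(2) sig(2)] unfolding b_def by blast
  have pc4: "\<sigma> \<in> P b \<Longrightarrow> hstep b \<sigma> \<noteq> hleft hstep b \<sigma> + 2 \<Longrightarrow> hstep (b - 1) \<sigma> = hstep b \<sigma> - 1 \<Longrightarrow> c = b - 1"
    using lm_left[OF lm s0(2) sig(2) ctend] unfolding b_def by blast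
  define d where "d = min (min d1 d2) (min d3 d4)"
  have dd: "d > 0" "d \<le> d1" "d \<le> d2" "d \<le> d3" "d \<le> d4" using d1(1) d2(1) d3(1) d4(1) by (auto simp: d_def)
  obtain r where r: "\<sigma> - d < r" "r < \<sigma>" "\<tau> \<le> r" "\<not> Q r" using acc dd(1) by blast
  have r1: "\<sigma> - d1 < r \<and> r < \<sigma>" "\<sigma> - d2 < r \<and> r < \<sigma>" "\<sigma> - d3 < r \<and> r < \<sigma>" "\<sigma> - d4 < r \<and> r < \<sigma>"
    using r dd by linarith+
  have xr: "x r = a" using d3(2) r1(3) by blast
  have xsr: "xstep r = c" using d4(2) r1(4) by blast
  have ac: "a < c" using r(4) xr xsr unfolding Q_def by simp
  have hr: "\<forall>k\<in>K. h k r = hleft h k \<sigma>" using d1(2) r1(1) by blast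
  have sr: "\<forall>k\<in>K. hstep k r = hleft hstep k \<sigma>" using d2(2) r1(2) by blast
  have hr': "h (b-1) r = hleft h (b-1) \<sigma>" "h b r = hleft h b \<sigma>" "h (b+1) r = hleft h (b+1) \<sigma>"
    using hr by (auto simp: K_def)
  have sr': "hstep (b-1) r = hleft hstep (b-1) \<sigma>" "hstep b r = hleft hstep b \<sigma>" "hstep (b+1) r = hleft hstep (b+1) \<sigma>"
    using sr by (auto simp: K_def)
  have rt: "t1 \<le> r" "r \<le> t2" using r tau sig by linarith+
  have pmSL: "hleft hstep k \<sigma> - hleft hstep (k-1) \<sigma> \<in> {-1,1}" for k using th_pm_left[OF clk ths s0(2)] by simp
  have jH: "h k \<sigma> = hleft h k \<sigma> + (if hleft h k \<sigma> - hleft h (k-1) \<sigma> = -1 \<and> \<not> hleft h (k+1) \<sigma> - hleft h k \<sigma> = -1 then 2 else 0)"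
    if "\<sigma> \<in> P k" for k using th_jump[OF th s0(1) that] unfolding occupied_def by simp
  have jS: "hstep k \<sigma> = hleft hstep k \<sigma> + (if hleft hstep k \<sigma> - hleft hstep (k-1) \<sigma> = -1 \<and> \<not> hleft hstep (k+1) \<sigma> - hleft hstep k \<sigma> = -1 then 2 else 0)"
    if "\<sigma> \<in> P k" for k using th_jump[OF ths s0(2) that] unfolding occupied_def by simp
  have nH: "h k \<sigma> = hleft h k \<sigma>" if "\<sigma> \<notin> P k" for k using th_nojump[OF clk th s0(1) that] .
  have nS: "hstep k \<sigma> = hleft hstep k \<sigma>" if "\<sigma> \<notin> P k" for k using th_nojump[OF clk ths s0(2) that] .
  have ca: "c \<le> b + 1" "b - 1 \<le> c" using pc1 pc2 pc3 by auto
  have aa: "a \<le> y + 1" "y - 1 \<le> a" using pa1 pa2 pa3 by auto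
  show False
  proof (cases "b < y")
    case True
    show False
    proof (cases "\<sigma> \<in> P b")
      case True
      have "\<sigma> \<notin> P y" using disj[OF _ True] \<open>b < y\<close> by simp
      then have "a = y" using pa1 by simp
      then show False using ac ca \<open>b < y\<close> by simp
    next
      case False
      then have "c = b" using pc1 by simp
      then show False using ac aa \<open>b < y\<close> by simp
    qed
  next
    case False
    then have yb: "y = b" using by0 by simp
    show False
    proof (cases "\<sigma> \<in> P b")
      case False
      then have "c = b" "a = y" using pc1 pa1 yb by auto
      then show False using ac yb by simp
    next
      case True
      note Pb = True
      have nb1: "\<sigma> \<notin> P (b+1)" "\<sigma> \<notin> P (b-1)" using disj[OF _ Pb] by auto
      show False
      proof (cases "h b \<sigma> = hleft h b \<sigma> + 2")
        case True
        then have ab: "a = b" using pa2 Pb yb by simp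
        then have cb: "c = b + 1" using ac ca by simp
        have nj: "hstep b \<sigma> \<noteq> hleft hstep b \<sigma> + 2" using pc2 Pb cb by auto
        have c3: "hstep (b+1) \<sigma> = hstep b \<sigma> - 1" using pc3 Pb nj cb by auto
        have jc: "hleft h (b+1) \<sigma> - hleft h b \<sigma> \<noteq> -1" using jH[OF Pb] True by (auto split: if_splits)
        have Sb: "hstep b \<sigma> = hleft hstep b \<sigma>" using jS[OF Pb] nj by (auto split: if_splits)
        have Sb1: "hstep (b+1) \<sigma> = hleft hstep (b+1) \<sigma>" using nS[OF nb1(1)] .
        have "hstep (b+1) r - hstep (b+1-1) r = -1" using sr' c3 Sb Sb1 by simp
        moreover have "x r < b + 1" using xr ab by simp
        ultimately have "h (b+1) r - h (b+1-1) r = -1" using inv[OF rt] by blast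
        then show False using jc hr' by simp
      next
        case False
        note nojH = False
        have av: "(a = b - 1 \<or> a = b + 1) \<and> h a \<sigma> = h b \<sigma> - 1" using pa3 Pb nojH yb by auto
        have ab: "a = b - 1" using av ac ca by auto
        have Hb: "h b \<sigma> = hleft h b \<sigma>" using jH[OF Pb] nojH by (auto split: if_splits)
        have Hb1: "h (b-1) \<sigma> = hleft h (b-1) \<sigma>" using nH[OF nb1(2)] .
        have HL: "hleft h b \<sigma> - hleft h (b-1) \<sigma> = 1" using av ab Hb Hb1 by simp
        have SL: "hleft hstep b \<sigma> - hleft hstep (b-1) \<sigma> \<noteq> -1"
        proof
          assume "hleft hstep b \<sigma> - hleft hstep (b-1) \<sigma> = -1"
          then have "hstep b r - hstep (b-1) r = -1" using sr' by simp
          moreover have "x r < b" using xr ab by simp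
          ultimately have "h b r - h (b-1) r = -1" using inv[OF rt] by blast
          then show False using HL hr' by simp
        qed
        have SL1: "hleft hstep b \<sigma> - hleft hstep (b-1) \<sigma> = 1" using SL pmSL[of b] by simp
        have nj: "hstep b \<sigma> \<noteq> hleft hstep b \<sigma> + 2" using jS[OF Pb] SL by auto
        have Sb: "hstep b \<sigma> = hleft hstep b \<sigma>" using jS[OF Pb] SL by auto
        have Sb1: "hstep (b-1) \<sigma> = hleft hstep (b-1) \<sigma>" using nS[OF nb1(2)] .
        have "hstep (b - 1) \<sigma> = hstep b \<sigma> - 1" using Sb Sb1 SL1 by simp
        then have "c = b - 1" using pc4[OF Pb nj] by simp
        then show False using ac ab by simp
      qed
    qed
  qed
qed

end

theorem proposition2p2:
  fixes P :: "int \<Rightarrow> real set"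
    and h hstep :: "int \<Rightarrow> real \<Rightarrow> int"
    and x xstep :: "real \<Rightarrow> int"
    and t t1 t2 :: real and x1 x2 :: int
  assumes "clock_realisation P"
    and "tasep_height P 0 h"
    and "backwards_path P h 0 t x"
    and "0 \<le> t1" and "t1 < t2" and "t2 \<le> t"
    and "x t1 \<ge> x1" and "x t2 \<ge> x2"
    and "step_height P x1 t1 hstep"
    and "leftmost_backwards_path P hstep t1 t2 xstep" and "xstep t2 = x2"
  shows "\<forall>\<tau>\<in>{t1..t2}. x \<tau> \<ge> xstep \<tau>"
proof
  fix \<tau> assume tau: "\<tau> \<in> {t1..t2}"
  have t12: "t1 \<le> t2" using assms(5) by simp
  have e2: "xstep t2 \<le> x t2" using assms(8,11) by simp
  have "t1 \<le> \<tau>" "\<tau> \<le> t2" using tau by auto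
  from compare[OF assms(1,2,3,4) t12 assms(6,7,9,10) e2 this]
  show "x \<tau> \<ge> xstep \<tau>" .
qed

end
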